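(* Let $\lambda_1,\lambda_2$ and $\Omega$ be as in the context, let $(c,\theta)\in\Omega$, $D=\sin\theta/c$, and let $\varphi$ be the solution of $$\varphi'(u)=\sqrt{c^2+2\cos\theta\,B-D^2B^2},\qquad \varphi(0)=0,\qquad\text{where } B=\lambda_1^2\cos^2\varphi(u)+\lambda_2^2\sin^2\varphi(u).$$ Then: (1) $\varphi$ is a well-defined increasing bijection from $\mathbb{R}$ to $\mathbb{R}$; (2) $\varphi$ is odd; (3) there exists a real number $U>0$ such that $\varphi(u+U)=\varphi(u)+\pi$ for all $u\in\mathbb{R}$; (4) $\varphi(kU)=k\pi$ for all $k\in\mathbb{Z}$; (5) $\varphi(kU/2)=k\pi/2$ for all odd integers $k$.
   Context: Either $\lambda_1>\lambda_2>0$ or $\lambda_1=\lambda_2=1$. For $c>0$ put $\theta_c^+=\pi$ if $c>\sqrt2\lambda_1$ and $\theta_c^+=\arccos(1-c^2/\lambda_1^2)\in(0,\pi]$ if $0<c\le\sqrt2\lambda_1$. $\Omega=\{(c,\theta)\in\mathbb{R}^2: c>0,\ \theta\in(-\theta_c^+,\theta_c^+)\}$. *)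

theory Defs
  imports "HOL-Analysis.Analysis"
begin

definition lambda_ok :: "real \<Rightarrow> real \<Rightarrow> bool" where
  "lambda_ok l1 l2 \<longleftrightarrow> (l1 > l2 \<and> l2 > 0) \<or> (l1 = 1 \<and> l2 = 1)"

definition theta_plus :: "real \<Rightarrow> real \<Rightarrow> real" where
  "theta_plus l1 c = (if c > sqrt 2 * l1 then pi else arccos (1 - c\<^sup>2 / l1\<^sup>2))"

definition Omega :: "real \<Rightarrow> (real \<times> real) set" where
  "Omega l1 = {(c, \<theta>). c > 0 \<and> - theta_plus l1 c < \<theta> \<and> \<theta> < theta_plus l1 c}"

definition Bfun :: "real \<Rightarrow> real \<Rightarrow> real \<Rightarrow> real" where
  "Bfun l1 l2 p = l1\<^sup>2 * (cos p)\<^sup>2 + l2\<^sup>2 * (sin p)\<^sup>2"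

definition rhs :: "real \<Rightarrow> real \<Rightarrow> real \<Rightarrow> real \<Rightarrow> real \<Rightarrow> real" where
  "rhs l1 l2 c \<theta> p =
     sqrt (c\<^sup>2 + 2 * cos \<theta> * Bfun l1 l2 p - (sin \<theta> / c)\<^sup>2 * (Bfun l1 l2 p)\<^sup>2)"

definition is_solution :: "real \<Rightarrow> real \<Rightarrow> real \<Rightarrow> real \<Rightarrow> (real \<Rightarrow> real) \<Rightarrow> bool" where
  "is_solution l1 l2 c \<theta> \<phi> \<longleftrightarrow>
     \<phi> 0 = 0 \<and> (\<forall>u. (\<phi> has_real_derivative rhs l1 l2 c \<theta> (\<phi> u)) (at u))"

end

theory Submission
  imports Defs
begin

lemma antideriv:
  fixes g :: "real \<Rightarrow> real"
  assumes cont: "continuous_on UNIV g"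
  obtains H where "H 0 = 0" "\<And>x. (H has_real_derivative g x) (at x)"
proof -
  define H where "H x = (if 0 \<le> x then integral {0..x} g else - integral {x..0} g)" for x
  have int: "g integrable_on {a..b}" for a b
    by (rule integrable_continuous_real) (meson cont continuous_on_subset top_greatest)
  have key: "H u = integral {a..u} g - integral {a..0} g" if "a \<le> 0" "a \<le> u" for a u
  proof (cases "0 \<le> u")
    case True
    have "integral {a..0} g + integral {0..u} g = integral {a..u} g"
      by (rule Henstock_Kurzweil_Integration.integral_combine[OF _ _ int[of a u]]) (use that True in auto)
    then show ?thesis using True by (simp add: H_def)
  next
    case False
    have "integral {a..u} g + integral {u..0} g = integral {a..0} g"
      by (rule Henstock_Kurzweil_Integration.integral_combine[OF _ _ int[of a 0]]) (use that False in auto)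
    then show ?thesis using False by (simp add: H_def)
  qed
  have "(H has_real_derivative g x) (at x)" for x
  proof -
    define a where "a = min 0 x - 1"
    define b where "b = x + 1"
    have "((\<lambda>u. integral {a..u} g) has_real_derivative g x) (at x within {a..b})"
      by (rule integral_has_real_derivative) (auto simp: a_def b_def intro: continuous_on_subset[OF cont])
    then have d1: "((\<lambda>u. integral {a..u} g) has_real_derivative g x) (at x)"
      using at_within_interior[of x "{a..b}"] by (simp add: a_def b_def)
    then have "((\<lambda>u. integral {a..u} g - integral {a..0} g) has_real_derivative g x) (at x)"
      by (auto intro!: derivative_eq_intros)
    then show ?thesis
      by (rule has_field_derivative_transform_within_open[where S="{a<..}"])
         (auto simp: a_def key[symmetric])
  qed
  moreover have "H 0 = 0" by (simp add: H_def)
  ultimately show ?thesis using that by blast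
qed

lemma inner_pos:
  fixes c B \<theta> :: real
  assumes "c > 0" "B > 0" "c\<^sup>2 > B * (1 - cos \<theta>)"
  shows "c\<^sup>2 + 2 * cos \<theta> * B - (sin \<theta> / c)\<^sup>2 * B\<^sup>2 > 0"
proof -
  have e: "c\<^sup>2 * (c\<^sup>2 + 2 * cos \<theta> * B - (sin \<theta> / c)\<^sup>2 * B\<^sup>2) = (c\<^sup>2 + B * cos \<theta>)\<^sup>2 - B\<^sup>2"
  proof -
    have "c \<noteq> 0" using assms(1) by simp
    have "c\<^sup>2 * ((sin \<theta> / c)\<^sup>2 * B\<^sup>2) = (sin \<theta>)\<^sup>2 * B\<^sup>2" using \<open>c \<noteq> 0\<close> by (simp add: power_divide)
    then show ?thesis using sin_cos_squared_add[of \<theta>] by algebra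
  qed
  have "c\<^sup>2 + B * cos \<theta> > B" using assms(3) by (simp add: algebra_simps)
  then have "(c\<^sup>2 + B * cos \<theta>)\<^sup>2 > B\<^sup>2" using assms(2)
    by (simp add: power_strict_mono)
  then have "c\<^sup>2 * (c\<^sup>2 + 2 * cos \<theta> * B - (sin \<theta> / c)\<^sup>2 * B\<^sup>2) > 0" using e by simp
  then show ?thesis using assms(1) by (simp add: zero_less_mult_iff)
qed

lemma const0: "(\<And>x. (f has_real_derivative 0) (at x)) \<Longrightarrow> f x = f y"
  using DERIV_isconst_all by blast

lemma cos_gt:
  fixes l1 c \<theta> :: real
  assumes "l1 > 0" "c > 0" "- theta_plus l1 c < \<theta>" "\<theta> < theta_plus l1 c"
  shows "cos \<theta> > 1 - c\<^sup>2 / l1\<^sup>2"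
proof (cases "c > sqrt 2 * l1")
  case True
  then have "(sqrt 2 * l1)\<^sup>2 < c\<^sup>2" using assms by (intro power_strict_mono) auto
  then have "2 * l1\<^sup>2 < c\<^sup>2" by (simp add: power_mult_distrib)
  then have "c\<^sup>2 / l1\<^sup>2 > 2" using assms(1) by (simp add: field_simps)
  then show ?thesis using cos_ge_minus_one[of \<theta>] by linarith
next
  case False
  then have tp: "theta_plus l1 c = arccos (1 - c\<^sup>2 / l1\<^sup>2)" by (simp add: theta_plus_def)
  have "c\<^sup>2 \<le> (sqrt 2 * l1)\<^sup>2" using False assms by (intro power_mono) auto
  then have "c\<^sup>2 \<le> 2 * l1\<^sup>2" by (simp add: power_mult_distrib)
  then have "c\<^sup>2 / l1\<^sup>2 \<le> 2" using assms(1) by (simp add: field_simps)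
  moreover have "c\<^sup>2 / l1\<^sup>2 \<ge> 0" by simp
  ultimately have r: "-1 \<le> 1 - c\<^sup>2 / l1\<^sup>2" "1 - c\<^sup>2 / l1\<^sup>2 \<le> 1" by linarith+
  have "cos (theta_plus l1 c) < cos \<bar>\<theta>\<bar>"
    using assms(3,4) tp arccos_ubound[OF r]
    by (intro cos_monotone_0_pi) auto
  moreover have "cos \<bar>\<theta>\<bar> = cos \<theta>" by (simp add: abs_if)
  ultimately show ?thesis using tp r by (simp add: cos_arccos)
qed

theorem proposition5p1:
  fixes l1 l2 c \<theta> :: real
  assumes "lambda_ok l1 l2"
    and "(c, \<theta>) \<in> Omega l1"
  shows "(\<exists>!\<phi>. is_solution l1 l2 c \<theta> \<phi>) \<and>
    (\<forall>\<phi>. is_solution l1 l2 c \<theta> \<phi> \<longrightarrow>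
       strict_mono \<phi> \<and> bij \<phi> \<and>
       (\<forall>u. \<phi> (- u) = - \<phi> u) \<and>
       (\<exists>U>0. (\<forall>u. \<phi> (u + U) = \<phi> u + pi) \<and>
              (\<forall>k::int. \<phi> (of_int k * U) = of_int k * pi) \<and>
              (\<forall>k::int. odd k \<longrightarrow> \<phi> (of_int k * U / 2) = of_int k * pi / 2)))"
proof -
  have l: "l1 > 0" "l2 > 0" "l2 \<le> l1" using assms(1) by (auto simp: lambda_ok_def)
  have c: "c > 0" "- theta_plus l1 c < \<theta>" "\<theta> < theta_plus l1 c"
    using assms(2) by (auto simp: Omega_def)
  have cg: "cos \<theta> > 1 - c\<^sup>2 / l1\<^sup>2" using cos_gt[OF l(1) c] .
  then have cg2: "l1\<^sup>2 * (1 - cos \<theta>) < c\<^sup>2" using l(1) by (simp add: field_simps)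
  define F where "F = rhs l1 l2 c \<theta>"
  have l21: "l2\<^sup>2 \<le> l1\<^sup>2" using l by (intro power_mono) auto
  have Bpos: "Bfun l1 l2 p > 0" for p
  proof -
    have "l2\<^sup>2 = l2\<^sup>2 * (cos p)\<^sup>2 + l2\<^sup>2 * (sin p)\<^sup>2" by (simp flip: distrib_left)
    also have "\<dots> \<le> Bfun l1 l2 p" unfolding Bfun_def using l21 by (intro add_mono mult_right_mono) auto
    finally show ?thesis using l(2) by (smt (verit) zero_less_power)
  qed
  have Ble: "Bfun l1 l2 p \<le> l1\<^sup>2" for p
  proof -
    have "Bfun l1 l2 p \<le> l1\<^sup>2 * (cos p)\<^sup>2 + l1\<^sup>2 * (sin p)\<^sup>2" unfolding Bfun_def using l21
      by (intro add_mono mult_right_mono) auto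
    also have "\<dots> = l1\<^sup>2" by (simp flip: distrib_left)
    finally show ?thesis .
  qed
  have inner_pos': "c\<^sup>2 + 2 * cos \<theta> * Bfun l1 l2 p - (sin \<theta> / c)\<^sup>2 * (Bfun l1 l2 p)\<^sup>2 > 0" for p
  proof (rule inner_pos[OF c(1) Bpos])
    have "Bfun l1 l2 p * (1 - cos \<theta>) \<le> l1\<^sup>2 * (1 - cos \<theta>)"
      using Ble by (intro mult_right_mono) auto
    then show "Bfun l1 l2 p * (1 - cos \<theta>) < c\<^sup>2" using cg2 by linarith
  qed
  have Fpos: "F p > 0" for p
    unfolding F_def rhs_def using inner_pos'[of p] by simp
  define M where "M = sqrt (c\<^sup>2 + 2 * l1\<^sup>2)"
  have Mpos: "M > 0" unfolding M_def using c by (simp add: add_pos_nonneg)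
  have FM: "F p \<le> M" for p
  proof -
    have "cos \<theta> * Bfun l1 l2 p \<le> l1\<^sup>2"
      using Ble[of p] Bpos[of p] cos_le_one[of \<theta>]
      by (smt (verit) mult_left_le_one_le mult_nonneg_nonneg mult_right_mono)
    moreover have "(sin \<theta> / c)\<^sup>2 * (Bfun l1 l2 p)\<^sup>2 \<ge> 0" by simp
    ultimately show ?thesis unfolding F_def rhs_def M_def
      by (intro real_sqrt_le_mono) linarith
  qed
  have Feven: "F (- p) = F p" for p by (simp add: F_def rhs_def Bfun_def)
  have Fper: "F (p + pi) = F p" for p by (simp add: F_def rhs_def Bfun_def)
  have Fcont: "continuous_on UNIV F"
    unfolding F_def rhs_def Bfun_def by (intro continuous_intros)
  define g where "g p = 1 / F p" for p
  have gcont: "continuous_on UNIV g"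
    unfolding g_def using Fcont Fpos by (intro continuous_intros) (auto simp: less_imp_neq[symmetric])
  have gpos: "g p > 0" for p using Fpos[of p] by (simp add: g_def)
  have gM: "g p \<ge> 1 / M" for p using Fpos[of p] FM[of p] Mpos
    unfolding g_def by (simp add: frac_le)
  obtain H where H0: "H 0 = 0" and HD: "\<And>x. (H has_real_derivative g x) (at x)"
    using antideriv[OF gcont] by blast
  have Hcont: "isCont H x" for x using HD DERIV_isCont by blast
  have Hsm: "H x < H y" if "x < y" for x y
  proof (rule DERIV_pos_imp_increasing[OF that])
    fix z show "\<exists>y. DERIV H z :> y \<and> y > 0" using HD[of z] gpos[of z] by blast
  qed
  have Hsmono: "strict_mono H" by (rule strict_monoI) (rule Hsm)
  have Hinj: "inj H" using Hsmono by (rule strict_mono_imp_inj_on)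
  have Hodd: "H (- x) = - H x" for x
  proof -
    have "((\<lambda>x. H (- x) + H x) has_real_derivative 0) (at x)" for x
    proof -
      have "((\<lambda>x. H (- x) + H x) has_real_derivative (g (- x) * (- 1) + g x)) (at x)"
        by (rule DERIV_add[OF DERIV_chain2[OF HD] HD]) (auto intro!: derivative_eq_intros)
      moreover have "g (- x) * (- 1) + g x = 0" by (simp add: g_def Feven)
      ultimately show ?thesis by simp
    qed
    then have "H (- x) + H x = H (- 0) + H 0" using const0[of "\<lambda>x. H (- x) + H x" x 0] by simp
    then show ?thesis using H0 by simp
  qed
  define U where "U = H pi"
  have Upos: "U > 0" unfolding U_def using Hsm[of 0 pi] H0 by simp
  have Hper: "H (x + pi) = H x + U" for x
  proof -
    have "((\<lambda>x. H (x + pi) - H x) has_real_derivative 0) (at x)" for x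
    proof -
      have "((\<lambda>x. H (x + pi) - H x) has_real_derivative (g (x + pi) * 1 - g x)) (at x)"
        by (rule DERIV_diff[OF DERIV_chain2[OF HD] HD]) (auto intro!: derivative_eq_intros)
      moreover have "g (x + pi) * 1 - g x = 0" by (simp add: g_def Fper)
      ultimately show ?thesis by simp
    qed
    then have "H (x + pi) - H x = H (0 + pi) - H 0" using const0[of "\<lambda>x. H (x + pi) - H x" x 0] by simp
    then show ?thesis using H0 by (simp add: U_def)
  qed
  have Hperk: "H (x + of_int k * pi) = H x + of_int k * U" for x k
  proof (induct k rule: int_induct[where k=0])
    case base then show ?case by simp
  next
    case (step1 i)
    have "H (x + of_int (i + 1) * pi) = H ((x + of_int i * pi) + pi)" by (simp add: algebra_simps)
    also have "\<dots> = H (x + of_int i * pi) + U" by (rule Hper)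
    also have "\<dots> = H x + of_int (i + 1) * U" using step1 by (simp add: algebra_simps)
    finally show ?case .
  next
    case (step2 i)
    have "H (x + of_int i * pi) = H ((x + of_int (i - 1) * pi) + pi)" by (simp add: algebra_simps)
    also have "\<dots> = H (x + of_int (i - 1) * pi) + U" using Hper by simp
    finally show ?case using step2 by (simp add: algebra_simps)
  qed
  have Hhalf: "H (pi / 2) = U / 2"
  proof -
    have "H (pi / 2) = H (- (pi / 2) + pi)" by simp
    also have "\<dots> = H (- (pi / 2)) + U" by (rule Hper)
    also have "\<dots> = - H (pi / 2) + U" by (simp add: Hodd)
    finally show ?thesis by simp
  qed
  have Hlow: "H x \<ge> x / M" if "x \<ge> 0" for x
  proof -
    have "H 0 - 0 / M \<le> H x - x / M"
    proof (rule DERIV_nonneg_imp_increasing_open[OF that])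
      fix y
      have "((\<lambda>x. H x - x / M) has_real_derivative g y - 1 / M) (at y)"
        using HD Mpos by (auto intro!: derivative_eq_intros)
      then show "\<exists>d. ((\<lambda>x. H x - x / M) has_real_derivative d) (at y) \<and> d \<ge> 0"
        using gM[of y] by force
    next
      show "continuous_on {0..x} (\<lambda>x. H x - x / M)"
        using Hcont Mpos by (intro continuous_intros continuous_at_imp_continuous_on) auto
    qed
    then show ?thesis using H0 by simp
  qed
  have Hup: "H x \<le> x / M" if "x \<le> 0" for x
    using Hlow[of "- x"] Hodd[of x] that by simp
  have Hsurj: "surj H"
  proof -
    have "\<exists>x. H x = y" for y
    proof (cases "y \<ge> 0")
      case True
      have "H (M * y) \<ge> y" using Hlow[of "M * y"] True Mpos by simp
      then show ?thesis using IVT[of H 0 y "M * y"] H0 True Mpos Hcont by auto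
    next
      case False
      have "M * y \<le> 0" using False Mpos by (simp add: mult_pos_neg less_imp_le)
      then have "H (M * y) \<le> y" using Hup[of "M * y"] Mpos by simp
      then show ?thesis using IVT[of H "M * y" y 0] H0 False Mpos Hcont
        by (auto simp: mult_pos_neg less_imp_le)
    qed
    then show ?thesis unfolding surj_def by (metis)
  qed
  have HF: "F p = inverse (g p)" for p using Fpos[of p] by (simp add: g_def)
  have solH: "H (\<psi> u) = u" if "is_solution l1 l2 c \<theta> \<psi>" for \<psi> u
  proof -
    have \<psi>0: "\<psi> 0 = 0" and \<psi>D: "\<And>u. (\<psi> has_real_derivative F (\<psi> u)) (at u)"
      using that by (auto simp: is_solution_def F_def)
    have "((\<lambda>u. H (\<psi> u) - u) has_real_derivative 0) (at u)" for u
    proof -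
      have "((\<lambda>u. H (\<psi> u) - u) has_real_derivative g (\<psi> u) * F (\<psi> u) - 1) (at u)"
        by (rule DERIV_diff[OF DERIV_chain2[OF HD \<psi>D] DERIV_ident])
      moreover have "g (\<psi> u) * F (\<psi> u) - 1 = 0" using Fpos[of "\<psi> u"] by (simp add: g_def)
      ultimately show ?thesis by simp
    qed
    then have "H (\<psi> u) - u = H (\<psi> 0) - 0" using const0[of "\<lambda>u. H (\<psi> u) - u" u 0] by simp
    then show ?thesis using \<psi>0 H0 by simp
  qed
  define \<phi>0 where "\<phi>0 = inv H"
  have HI: "H (\<phi>0 y) = y" for y unfolding \<phi>0_def using Hsurj by (simp add: surj_f_inv_f)
  have IH: "\<phi>0 (H x) = x" for x unfolding \<phi>0_def using Hinj by simp
  have sol0: "is_solution l1 l2 c \<theta> \<phi>0"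
    unfolding is_solution_def
  proof (intro conjI allI)
    show "\<phi>0 0 = 0" using IH[of 0] H0 by simp
    fix u
    have cont: "isCont \<phi>0 u"
      using isCont_inverse_function[of 1 "\<phi>0 u" \<phi>0 H] IH Hcont HI by simp
    have "(\<phi>0 has_real_derivative inverse (g (\<phi>0 u))) (at u)"
      by (rule DERIV_inverse_function[where a="u - 1" and b="u + 1", OF HD _ _ _ _ cont])
         (use gpos[of "\<phi>0 u"] HI in auto)
    then show "(\<phi>0 has_real_derivative rhs l1 l2 c \<theta> (\<phi>0 u)) (at u)"
      using HF F_def by simp
  qed
  have uniq: "\<psi> = \<phi>0" if "is_solution l1 l2 c \<theta> \<psi>" for \<psi>
  proof
    fix u show "\<psi> u = \<phi>0 u" using IH[of "\<psi> u"] solH[OF that, of u] by simp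
  qed
  have props: "strict_mono \<phi>0 \<and> bij \<phi>0 \<and>
       (\<forall>u. \<phi>0 (- u) = - \<phi>0 u) \<and>
       (\<exists>U>0. (\<forall>u. \<phi>0 (u + U) = \<phi>0 u + pi) \<and>
              (\<forall>k::int. \<phi>0 (of_int k * U) = of_int k * pi) \<and>
              (\<forall>k::int. odd k \<longrightarrow> \<phi>0 (of_int k * U / 2) = of_int k * pi / 2))"
  proof (intro conjI exI[of _ U] allI impI)
    show "strict_mono \<phi>0"
    proof (rule strict_monoI)
      fix x y :: real assume "x < y"
      show "\<phi>0 x < \<phi>0 y"
      proof (rule ccontr)
        assume "\<not> \<phi>0 x < \<phi>0 y"
        then have "\<phi>0 y \<le> \<phi>0 x" by simp
        then have "H (\<phi>0 y) \<le> H (\<phi>0 x)" using Hsm[of "\<phi>0 y" "\<phi>0 x"]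
          by (cases "\<phi>0 y = \<phi>0 x") auto
        then show False using HI[of x] HI[of y] \<open>x < y\<close> by simp
      qed
    qed
    have "inj \<phi>0"
    proof (rule injI)
      fix x y assume "\<phi>0 x = \<phi>0 y"
      then show "x = y" using HI[of x] HI[of y] by metis
    qed
    moreover have "surj \<phi>0" by (rule surjI[of _ H]) (rule IH)
    ultimately show "bij \<phi>0" by (simp add: bij_def)
    show "\<phi>0 (- u) = - \<phi>0 u" for u using IH[of "- \<phi>0 u"] Hodd[of "\<phi>0 u"] HI[of u] by simp
    show "U > 0" by (rule Upos)
    show "\<phi>0 (u + U) = \<phi>0 u + pi" for u using IH[of "\<phi>0 u + pi"] Hper[of "\<phi>0 u"] HI[of u] by simp
    show "\<phi>0 (of_int k * U) = of_int k * pi" for k :: int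
      using IH[of "of_int k * pi"] Hperk[of 0 k] H0 by simp
    fix k :: int assume "odd k"
    then obtain m where m: "k = 2 * m + 1" by (metis oddE)
    have "H (pi / 2 + of_int m * pi) = of_int k * U / 2"
      using Hperk[of "pi / 2" m] Hhalf m by (simp add: algebra_simps)
    moreover have "pi / 2 + of_int m * pi = of_int k * pi / 2" using m by (simp add: algebra_simps)
    ultimately show "\<phi>0 (of_int k * U / 2) = of_int k * pi / 2" using IH by metis
  qed
  show ?thesis
  proof (rule conjI)
    show "\<exists>!\<phi>. is_solution l1 l2 c \<theta> \<phi>" using sol0 uniq by blast
  next
    show "\<forall>\<phi>. is_solution l1 l2 c \<theta> \<phi> \<longrightarrow>
       strict_mono \<phi> \<and> bij \<phi> \<and>
       (\<forall>u. \<phi> (- u) = - \<phi> u) \<and>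
       (\<exists>U>0. (\<forall>u. \<phi> (u + U) = \<phi> u + pi) \<and>
              (\<forall>k::int. \<phi> (of_int k * U) = of_int k * pi) \<and>
              (\<forall>k::int. odd k \<longrightarrow> \<phi> (of_int k * U / 2) = of_int k * pi / 2))"
    proof (intro allI impI)
    fix \<psi> assume "is_solution l1 l2 c \<theta> \<psi>"
    then have "\<psi> = \<phi>0" by (rule uniq)
    then show "strict_mono \<psi> \<and> bij \<psi> \<and>
       (\<forall>u. \<psi> (- u) = - \<psi> u) \<and>
       (\<exists>U>0. (\<forall>u. \<psi> (u + U) = \<psi> u + pi) \<and>
              (\<forall>k::int. \<psi> (of_int k * U) = of_int k * pi) \<and>
              (\<forall>k::int. odd k \<longrightarrow> \<psi> (of_int k * U / 2) = of_int k * pi / 2))"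
      using props by simp
    qed
  qed
qed

end
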